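(* Let $K:\mathbb{N}_0\to\mathbb{N}_0$, $n\mapsto K_n$, be a scaling, let $\gamma_n$ be the number of deleted nodes, and let $P(n,K_n,\gamma_n)$ denote the probability that $\mathbb{H}(n;K_n,\gamma_n)$ is connected. (a) If $\gamma_n = o(\sqrt{n})$ and $K_n\ge 2$ for all $n$, then $\lim_{n\to\infty} P(n,K_n,\gamma_n)=1$. (b) If $\gamma_n=\Omega(\sqrt{n})$ and $\gamma_n=o(n)$, and for some sequence $\omega_n$ it holds that \[ K_n = r_2(\gamma_n)+\omega_n, \qquad\text{where } r_2(\gamma_n)=\frac{\log(\gamma_n)}{\log 2 + 1/2}, \] then $\lim_{n\to\infty} P(n,K_n,\gamma_n)=1$ provided $\lim_{n\to\infty}\omega_n=\infty$.
   Context: Random K-out graph $\mathbb{H}(n;K_n)$: on vertex set $V=\{v_1,\dots,v_n\}$ with labels $\mathcal{N}=\{1,\dots,n\}$, each node $v_i$ independently selects a set $\Gamma_{n,i}\subseteq \mathcal{N}\setminus\{i\}$ of $K_n$ distinct labels uniformly at random (the sets $\Gamma_{n,1},\dots,\Gamma_{n,n}$ are mutually independent). Distinct nodes $v_i,v_j$ are adjacent if $j\in\Gamma_{n,i}$ or $i\in\Gamma_{n,j}$ (undirected graph). The graph $\mathbb{H}(n;K_n,\gamma_n)$ is obtained by choosing a set $D\subset V$ of $\gamma_n$ nodes uniformly at random and deleting them: it has vertex set $R=V\setminus D$, and two distinct vertices of $R$ are adjacent iff they are adjacent in $\mathbb{H}(n;K_n)$. $\log$ is the natural logarithm; Landau notation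 $o,\Omega$ is as $n\to\infty$. *)

theory Defs
  imports "HOL-Library.FuncSet" "HOL-Library.Landau_Symbols" Complex_Main
begin

text \<open>Random K-out graph H(n;K) on labels {1..n}: node i selects a K-subset
  Gamma i of {1..n} - {i}.  Then a set D of gamma labels is deleted uniformly at
  random, independently.  The probability space is the uniform distribution on
  the finite set of all outcomes (Gamma, D).\<close>

definition kout_choices :: "nat \<Rightarrow> nat \<Rightarrow> (nat \<Rightarrow> nat set) set" where
  "kout_choices n K = Pi\<^sub>E {1..n} (\<lambda>i. {S. S \<subseteq> {1..n} - {i} \<and> card S = K})"

definition deletion_choices :: "nat \<Rightarrow> nat \<Rightarrow> nat set set" where
  "deletion_choices n g = {D. D \<subseteq> {1..n} \<and> card D = g}"

definition outcomes :: "nat \<Rightarrow> nat \<Rightarrow> nat \<Rightarrow> ((nat \<Rightarrow> nat set) \<times> nat set) set" where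
  "outcomes n K g = kout_choices n K \<times> deletion_choices n g"

definition kout_adj :: "(nat \<Rightarrow> nat set) \<Rightarrow> nat \<Rightarrow> nat \<Rightarrow> bool" where
  "kout_adj \<Gamma> i j \<longleftrightarrow> i \<noteq> j \<and> (j \<in> \<Gamma> i \<or> i \<in> \<Gamma> j)"

definition induced_edges :: "(nat \<Rightarrow> nat set) \<Rightarrow> nat set \<Rightarrow> (nat \<times> nat) set" where
  "induced_edges \<Gamma> R = {(i, j). i \<in> R \<and> j \<in> R \<and> kout_adj \<Gamma> i j}"

definition graph_connected :: "(nat \<Rightarrow> nat set) \<Rightarrow> nat set \<Rightarrow> bool" where
  "graph_connected \<Gamma> R \<longleftrightarrow> (\<forall>u\<in>R. \<forall>v\<in>R. (u, v) \<in> (induced_edges \<Gamma> R)\<^sup>*)"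

definition conn_prob :: "nat \<Rightarrow> nat \<Rightarrow> nat \<Rightarrow> real" where
  "conn_prob n K g =
     real (card {(\<Gamma>, D) \<in> outcomes n K g. graph_connected \<Gamma> ({1..n} - D)})
     / real (card (outcomes n K g))"

definition r2 :: "nat \<Rightarrow> real" where
  "r2 g = ln (real g) / (ln 2 + 1/2)"

end

theory Submission
  imports Defs "HOL-Real_Asymp.Real_Asymp"
begin


lemma pow_div_fact_le_exp:
  fixes x :: real assumes "0 \<le> x"
  shows "x ^ n / fact n \<le> exp x"
proof -
  have "x ^ n / fact n \<le> (\<Sum>k<Suc n. x ^ k / fact k)"
    using assms by (intro member_le_sum) auto
  also have "\<dots> \<le> (\<Sum>k. x ^ k / fact k)"
  proof (rule sum_le_suminf)
    show "summable (\<lambda>k. x ^ k / fact k)"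
      using summable_exp_generic[of x] by (simp add: divide_inverse mult.commute)
  qed (use assms in auto)
  also have "\<dots> = exp x" by (simp add: exp_def divide_inverse mult.commute)
  finally show ?thesis .
qed

lemma choose_le_em:
  assumes "1 \<le> s"
  shows "real (m choose s) \<le> (exp 1 * real m / real s) ^ s"
proof -
  have f: "real (m choose s) * fact s \<le> real m ^ s"
    using binomial_fact_pow[of m s] by (metis of_nat_fact of_nat_le_iff of_nat_mult of_nat_power)
  have e: "real s ^ s / fact s \<le> exp 1 ^ s"
    using pow_div_fact_le_exp[of "real s" s] by (simp add: exp_of_nat_mult[symmetric])
  have "real (m choose s) \<le> real m ^ s / fact s" using f by (simp add: field_simps)
  also have "\<dots> = (real m / real s) ^ s * (real s ^ s / fact s)"
    using assms by (simp add: field_simps power_divide)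
  also have "\<dots> \<le> (real m / real s) ^ s * exp 1 ^ s"
    by (intro mult_left_mono e) auto
  also have "\<dots> = (exp 1 * real m / real s) ^ s" by (simp add: power_divide power_mult_distrib)
  finally show ?thesis .
qed

lemma binom_step: "real (Suc k) * real (n choose Suc k) = (real n - real k) * real (n choose k)"
proof (cases "k \<le> n")
  case True
  have "Suc k * (n choose Suc k) = (n - k) * (n choose k)"
    using binomial_absorption[of k n] binomial_absorb_comp[of n k] by simp
  then have "real (Suc k * (n choose Suc k)) = real ((n - k) * (n choose k))" by simp
  then show ?thesis using True by (simp only: of_nat_mult of_nat_diff)
next
  case False then show ?thesis by (simp add: binomial_eq_0)
qed

lemma binom_ratio:
  assumes "c \<le> N"
  shows "real (c choose K) * real N ^ K \<le> real (N choose K) * real c ^ K"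
proof (induction K)
  case 0 then show ?case by simp
next
  case (Suc K)
  show ?case
  proof (cases "K \<le> c")
    case False
    then have "c < Suc K" by simp
    then have z: "c choose Suc K = 0" by (rule binomial_eq_0)
    show ?thesis unfolding z by simp
  next
    case True
    have cN: "real c \<le> real N" using assms by simp
    have stc: "real (Suc K) * real (c choose Suc K) = (real c - real K) * real (c choose K)"
      by (rule binom_step)
    have stN: "real (Suc K) * real (N choose Suc K) = (real N - real K) * real (N choose K)"
      by (rule binom_step)
    have "real (Suc K) * (real (c choose Suc K) * real N ^ Suc K)
        = (real (Suc K) * real (c choose Suc K)) * real N ^ Suc K" by (simp only: mult.assoc)
    also have "\<dots> = ((real c - real K) * real (c choose K)) * real N ^ Suc K" by (simp only: stc)
    also have "\<dots> = ((real c - real K) * real N) * (real (c choose K) * real N ^ K)"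
      by (simp add: algebra_simps)
    also have "\<dots> \<le> ((real N - real K) * real c) * (real (N choose K) * real c ^ K)"
    proof (rule mult_mono)
      show "(real c - real K) * real N \<le> (real N - real K) * real c"
        using cN by (simp add: algebra_simps mult_left_mono)
      show "0 \<le> (real N - real K) * real c" using True cN by simp
    qed (use Suc True in auto)
    also have "\<dots> = ((real N - real K) * real (N choose K)) * real c ^ Suc K"
      by (simp add: algebra_simps)
    also have "\<dots> = (real (Suc K) * real (N choose Suc K)) * real c ^ Suc K" by (simp only: stN)
    also have "\<dots> = real (Suc K) * (real (N choose Suc K) * real c ^ Suc K)" by (simp only: mult.assoc)
    finally show ?thesis by (rule mult_left_le_imp_le) simp
  qed
qed



definition closedS :: "(nat \<Rightarrow> nat set) \<Rightarrow> nat set \<Rightarrow> nat set \<Rightarrow> bool" where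
  "closedS \<Gamma> S T \<longleftrightarrow> (\<forall>i\<in>S. \<Gamma> i \<inter> T = {}) \<and> (\<forall>j\<in>T. \<Gamma> j \<inter> S = {})"

lemma kout_adj_sym: "kout_adj \<Gamma> i j = kout_adj \<Gamma> j i"
  unfolding kout_adj_def by auto

lemma disconnected_closed:
  assumes fin: "finite R" and nc: "\<not> graph_connected \<Gamma> R"
  shows "\<exists>S. S \<subseteq> R \<and> S \<noteq> {} \<and> 2 * card S \<le> card R \<and> closedS \<Gamma> S (R - S)"
proof -
  let ?E = "induced_edges \<Gamma> R"
  from nc obtain u v where u: "u \<in> R" and v: "v \<in> R" and uv: "(u, v) \<notin> ?E\<^sup>*"
    unfolding graph_connected_def by blast
  define C where "C = {w \<in> R. (u, w) \<in> ?E\<^sup>*}"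
  have uC: "u \<in> C" using u by (simp add: C_def)
  have vC: "v \<in> R - C" using v uv by (simp add: C_def)
  have CR: "C \<subseteq> R" by (auto simp: C_def)
  have noadj: "\<not> kout_adj \<Gamma> i j" if "i \<in> C" "j \<in> R - C" for i j
  proof
    assume a: "kout_adj \<Gamma> i j"
    have "(i, j) \<in> ?E" using a that CR by (auto simp: induced_edges_def)
    moreover have "(u, i) \<in> ?E\<^sup>*" using that by (simp add: C_def)
    ultimately have "(u, j) \<in> ?E\<^sup>*" by (meson rtrancl.rtrancl_into_rtrancl)
    then show False using that by (simp add: C_def)
  qed
  have cl: "closedS \<Gamma> S T" if "S \<inter> T = {}" "\<And>i j. i \<in> S \<Longrightarrow> j \<in> T \<Longrightarrow> \<not> kout_adj \<Gamma> i j"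
    for S T
    unfolding closedS_def
  proof (intro conjI ballI)
    fix i assume i: "i \<in> S"
    show "\<Gamma> i \<inter> T = {}"
    proof (rule ccontr)
      assume "\<Gamma> i \<inter> T \<noteq> {}"
      then obtain j where "j \<in> \<Gamma> i" "j \<in> T" by blast
      then have "kout_adj \<Gamma> i j" using i that(1) unfolding kout_adj_def by blast
      then show False using that(2) i \<open>j \<in> T\<close> by blast
    qed
  next
    fix j assume j: "j \<in> T"
    show "\<Gamma> j \<inter> S = {}"
    proof (rule ccontr)
      assume "\<Gamma> j \<inter> S \<noteq> {}"
      then obtain i where "i \<in> \<Gamma> j" "i \<in> S" by blast
      then have "kout_adj \<Gamma> i j" using j that(1) unfolding kout_adj_def by blast
      then show False using that(2) j \<open>i \<in> S\<close> by blast
    qed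
  qed
  show ?thesis
  proof (cases "2 * card C \<le> card R")
    case True
    have "closedS \<Gamma> C (R - C)" by (rule cl) (use noadj in auto)
    then show ?thesis using True CR uC by blast
  next
    case False
    have cd: "card (R - C) = card R - card C" using CR fin by (simp add: card_Diff_subset finite_subset)
    have "card C \<le> card R" using CR fin by (simp add: card_mono)
    then have "2 * card (R - C) \<le> card R" using False cd by linarith
    moreover have "R - (R - C) = C" using CR by blast
    moreover have "closedS \<Gamma> (R - C) C"
    proof (rule cl)
      show "(R - C) \<inter> C = {}" by blast
      fix i j assume "i \<in> R - C" "j \<in> C"
      then show "\<not> kout_adj \<Gamma> i j" using noadj[of j i] kout_adj_sym[of \<Gamma> i j] by simp
    qed
    ultimately show ?thesis using vC by (metis Diff_subset empty_iff)
  qed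
qed

lemma finite_ksub: "finite {X. X \<subseteq> A \<and> card X = K}" if "finite A" for A :: "'a set"
proof -
  have "{X. X \<subseteq> A \<and> card X = K} \<subseteq> Pow A" by auto
  moreover have "finite (Pow A)" using that by simp
  ultimately show ?thesis by (rule finite_subset)
qed

lemma card_closed:
  assumes S: "S \<subseteq> {1..n}" and T: "T \<subseteq> {1..n}" and ST: "S \<inter> T = {}"
  defines "F \<equiv> (\<lambda>i. if i \<in> S then T else if i \<in> T then S else {})"
  shows "card {\<Gamma> \<in> kout_choices n K. closedS \<Gamma> S T}
       = (\<Prod>i\<in>{1..n}. card ({1..n} - {i} - F i) choose K)"
proof -
  have eq: "{\<Gamma> \<in> kout_choices n K. closedS \<Gamma> S T}
      = Pi\<^sub>E {1..n} (\<lambda>i. {X. X \<subseteq> {1..n} - {i} - F i \<and> card X = K})"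
  proof (intro equalityI subsetI)
    fix \<Gamma> assume "\<Gamma> \<in> {\<Gamma> \<in> kout_choices n K. closedS \<Gamma> S T}"
    then have k: "\<Gamma> \<in> kout_choices n K" and c: "closedS \<Gamma> S T" by auto
    show "\<Gamma> \<in> Pi\<^sub>E {1..n} (\<lambda>i. {X. X \<subseteq> {1..n} - {i} - F i \<and> card X = K})"
      using k c S T ST unfolding kout_choices_def closedS_def F_def PiE_iff by auto
  next
    fix \<Gamma> assume a: "\<Gamma> \<in> Pi\<^sub>E {1..n} (\<lambda>i. {X. X \<subseteq> {1..n} - {i} - F i \<and> card X = K})"
    have "\<Gamma> \<in> kout_choices n K"
      using a unfolding kout_choices_def PiE_iff by auto
    moreover have "closedS \<Gamma> S T"
      unfolding closedS_def
    proof (intro conjI ballI)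
      fix i assume "i \<in> S" then show "\<Gamma> i \<inter> T = {}"
        using a S unfolding PiE_iff F_def by fastforce
    next
      fix j assume jT: "j \<in> T"
      have jS: "j \<notin> S" using ST jT by blast
      have jn: "j \<in> {1..n}" using T jT by blast
      have "\<Gamma> j \<subseteq> {1..n} - {j} - F j" using a jn unfolding PiE_iff by blast
      moreover have "F j = S" by (simp add: F_def jS jT)
      ultimately show "\<Gamma> j \<inter> S = {}" by blast
    qed
    ultimately show "\<Gamma> \<in> {\<Gamma> \<in> kout_choices n K. closedS \<Gamma> S T}" by simp
  qed
  show ?thesis unfolding eq
    by (simp add: card_PiE n_subsets)
qed

lemma card_kout: "card (kout_choices n K) = (n - 1 choose K) ^ n"
proof -
  have "card (kout_choices n K) = (\<Prod>i\<in>{1..n}. card ({1..n} - {i}) choose K)"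
    unfolding kout_choices_def by (simp add: card_PiE n_subsets)
  also have "\<dots> = (\<Prod>i\<in>{1..n}. (n - 1) choose K)"
    by (intro prod.cong) auto
  finally show ?thesis by simp
qed

lemma finite_kout: "finite (kout_choices n K)"
  unfolding kout_choices_def by (intro finite_PiE) (auto intro: finite_ksub)

lemma ratio_bound:
  assumes S: "S \<subseteq> {1..n}" and T: "T \<subseteq> {1..n}" and ST: "S \<inter> T = {}"
    and n: "2 \<le> n" and K: "K \<le> n - 1"
  shows "real (card {\<Gamma> \<in> kout_choices n K. closedS \<Gamma> S T})
    \<le> real (card (kout_choices n K)) *
       (((real (n - 1) - real (card T)) / real (n - 1)) ^ card S *
        ((real (n - 1) - real (card S)) / real (n - 1)) ^ card T) ^ K"
proof -
  define N where "N = n - 1"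
  define F where "F = (\<lambda>i. if i \<in> S then T else if i \<in> T then S else {})"
  have Npos: "real N > 0" using n by (simp add: N_def)
  have finS: "finite S" and finT: "finite T" using S T finite_subset by blast+
  have cF: "card ({1..n} - {i} - F i) = N - card (F i)" and FN: "card (F i) \<le> N"
    if i: "i \<in> {1..n}" for i
  proof -
    have sub: "F i \<subseteq> {1..n} - {i}" using S T ST i by (auto simp: F_def)
    have "card ({1..n} - {i}) = N" using i by (simp add: N_def)
    moreover have "finite (F i)" using sub finite_subset by blast
    ultimately show "card ({1..n} - {i} - F i) = N - card (F i)"
      using sub by (simp add: card_Diff_subset)
    show "card (F i) \<le> N" using sub \<open>card ({1..n} - {i}) = N\<close>
      by (metis card_mono finite_Diff finite_atLeastAtMost)
  qed
  have "real (card {\<Gamma> \<in> kout_choices n K. closedS \<Gamma> S T})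
      = (\<Prod>i\<in>{1..n}. real (card ({1..n} - {i} - F i) choose K))"
    using card_closed[OF S T ST, of K] by (simp add: F_def)
  also have "\<dots> \<le> (\<Prod>i\<in>{1..n}. real (N choose K) * ((real N - real (card (F i))) / real N) ^ K)"
  proof (rule prod_mono, safe)
    fix i assume i: "i \<in> {1..n}"
    have le: "N - card (F i) \<le> N" by simp
    have "real ((N - card (F i)) choose K) * real N ^ K \<le> real (N choose K) * real (N - card (F i)) ^ K"
      by (rule binom_ratio[OF le])
    then have "real ((N - card (F i)) choose K) \<le> real (N choose K) * (real (N - card (F i)) / real N) ^ K"
      using Npos by (simp add: field_simps power_divide)
    then show "real (card ({1..n} - {i} - F i) choose K) \<le> real (N choose K) * ((real N - real (card (F i))) / real N) ^ K"
      using cF[OF i] FN[OF i] by (simp add: of_nat_diff)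
  qed simp
  also have "\<dots> = real (N choose K) ^ n * (\<Prod>i\<in>{1..n}. ((real N - real (card (F i))) / real N) ^ K)"
    by (simp add: prod.distrib)
  also have "(\<Prod>i\<in>{1..n}. ((real N - real (card (F i))) / real N) ^ K)
      = (\<Prod>i\<in>{1..n}. (if i \<in> S then ((real N - real (card T)) / real N) ^ K
             else if i \<in> T then ((real N - real (card S)) / real N) ^ K else 1))"
    by (intro prod.cong) (use Npos in \<open>auto simp: F_def\<close>)
  also have "\<dots> = (((real N - real (card T)) / real N) ^ K) ^ card S * (((real N - real (card S)) / real N) ^ K) ^ card T"
  proof -
    have e1: "{Suc 0..n} \<inter> S = S" using S by auto
    have e2: "{Suc 0..n} \<inter> - S \<inter> T = T" using T ST by auto
    show ?thesis
      by (simp add: prod.If_cases e1 e2)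
  qed
  also have "\<dots> = (((real N - real (card T)) / real N) ^ card S * ((real N - real (card S)) / real N) ^ card T) ^ K"
    by (simp add: power_mult_distrib power_mult[symmetric] mult.commute)
  finally show ?thesis
    by (simp add: card_kout N_def)
qed



definition uu :: "nat \<Rightarrow> nat \<Rightarrow> nat \<Rightarrow> real" where
  "uu n m s = ((real (n - 1) - real (m - s)) / real (n - 1)) ^ s *
              ((real (n - 1) - real s) / real (n - 1)) ^ (m - s)"

lemma sum_by_card:
  fixes f :: "nat \<Rightarrow> real"
  assumes fin: "finite R"
  shows "(\<Sum>S\<in>{S. S \<subseteq> R \<and> S \<noteq> {} \<and> 2 * card S \<le> card R}. f (card S))
       = (\<Sum>s=1..card R div 2. real (card R choose s) * f s)"
proof -
  define A where "A = (\<lambda>s. {S. S \<subseteq> R \<and> card S = s})"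
  have eq: "{S. S \<subseteq> R \<and> S \<noteq> {} \<and> 2 * card S \<le> card R} = (\<Union>s\<in>{1..card R div 2}. A s)"
  proof (intro equalityI subsetI)
    fix S assume "S \<in> {S. S \<subseteq> R \<and> S \<noteq> {} \<and> 2 * card S \<le> card R}"
    then have S: "S \<subseteq> R" "S \<noteq> {}" "2 * card S \<le> card R" by auto
    have "finite S" using S(1) fin finite_subset by blast
    then have "card S \<ge> 1" using S(2) by (simp add: Suc_le_eq card_gt_0_iff)
    moreover have "card S \<le> card R div 2" using S(3) by linarith
    ultimately show "S \<in> (\<Union>s\<in>{1..card R div 2}. A s)" using S(1) by (auto simp: A_def)
  next
    fix S assume "S \<in> (\<Union>s\<in>{1..card R div 2}. A s)"
    then obtain s where s: "1 \<le> s" "s \<le> card R div 2" "S \<subseteq> R" "card S = s" by (auto simp: A_def)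
    then have "S \<noteq> {}" by auto
    then show "S \<in> {S. S \<subseteq> R \<and> S \<noteq> {} \<and> 2 * card S \<le> card R}" using s by auto
  qed
  have finA: "finite (A s)" for s unfolding A_def using finite_ksub[OF fin] .
  have "(\<Sum>S\<in>{S. S \<subseteq> R \<and> S \<noteq> {} \<and> 2 * card S \<le> card R}. f (card S))
      = (\<Sum>s\<in>{1..card R div 2}. \<Sum>S\<in>A s. f (card S))"
    unfolding eq by (rule sum.UNION_disjoint) (use finA in \<open>auto simp: A_def\<close>)
  also have "\<dots> = (\<Sum>s\<in>{1..card R div 2}. real (card R choose s) * f s)"
  proof (rule sum.cong[OF refl])
    fix s
    have "(\<Sum>S\<in>A s. f (card S)) = (\<Sum>S\<in>A s. f s)" by (rule sum.cong) (auto simp: A_def)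
    also have "\<dots> = real (card (A s)) * f s" by simp
    also have "card (A s) = card R choose s" unfolding A_def using n_subsets[OF fin] .
    finally show "(\<Sum>S\<in>A s. f (card S)) = real (card R choose s) * f s" by simp
  qed
  finally show ?thesis .
qed

lemma bad_bound:
  assumes R: "R \<subseteq> {1..n}" and n: "2 \<le> n" and K: "K \<le> n - 1"
  shows "real (card {\<Gamma> \<in> kout_choices n K. \<not> graph_connected \<Gamma> R})
    \<le> real (card (kout_choices n K)) * (\<Sum>s=1..card R div 2. real (card R choose s) * uu n (card R) s ^ K)"
proof -
  define Sub where "Sub = {S. S \<subseteq> R \<and> S \<noteq> {} \<and> 2 * card S \<le> card R}"
  have fin: "finite R" using R finite_subset by blast
  have finSub: "finite Sub" unfolding Sub_def
    by (rule finite_subset[of _ "Pow R"]) (use fin in auto)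
  have sub: "{\<Gamma> \<in> kout_choices n K. \<not> graph_connected \<Gamma> R}
      \<subseteq> (\<Union>S\<in>Sub. {\<Gamma> \<in> kout_choices n K. closedS \<Gamma> S (R - S)})"
  proof
    fix \<Gamma> assume "\<Gamma> \<in> {\<Gamma> \<in> kout_choices n K. \<not> graph_connected \<Gamma> R}"
    then have k: "\<Gamma> \<in> kout_choices n K" and nc: "\<not> graph_connected \<Gamma> R" by auto
    from disconnected_closed[OF fin nc] obtain S where
      "S \<subseteq> R \<and> S \<noteq> {} \<and> 2 * card S \<le> card R \<and> closedS \<Gamma> S (R - S)" by blast
    then show "\<Gamma> \<in> (\<Union>S\<in>Sub. {\<Gamma> \<in> kout_choices n K. closedS \<Gamma> S (R - S)})"
      using k by (auto simp: Sub_def)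
  qed
  have "card {\<Gamma> \<in> kout_choices n K. \<not> graph_connected \<Gamma> R}
      \<le> card (\<Union>S\<in>Sub. {\<Gamma> \<in> kout_choices n K. closedS \<Gamma> S (R - S)})"
    by (rule card_mono[OF _ sub]) (intro finite_UN_I finSub; use finite_kout in auto)
  also have "\<dots> \<le> (\<Sum>S\<in>Sub. card {\<Gamma> \<in> kout_choices n K. closedS \<Gamma> S (R - S)})"
    by (rule card_UN_le[OF finSub])
  finally have "real (card {\<Gamma> \<in> kout_choices n K. \<not> graph_connected \<Gamma> R})
      \<le> real (\<Sum>S\<in>Sub. card {\<Gamma> \<in> kout_choices n K. closedS \<Gamma> S (R - S)})"
    by (simp only: of_nat_le_iff)
  then have "real (card {\<Gamma> \<in> kout_choices n K. \<not> graph_connected \<Gamma> R})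
      \<le> (\<Sum>S\<in>Sub. real (card {\<Gamma> \<in> kout_choices n K. closedS \<Gamma> S (R - S)}))"
    by (simp only: of_nat_sum)
  also have "\<dots> \<le> (\<Sum>S\<in>Sub. real (card (kout_choices n K)) * uu n (card R) (card S) ^ K)"
  proof (rule sum_mono)
    fix S assume S: "S \<in> Sub"
    then have SR: "S \<subseteq> R" by (simp add: Sub_def)
    have fS: "finite S" using SR fin finite_subset by blast
    have cT: "card (R - S) = card R - card S" using SR fS by (simp add: card_Diff_subset)
    have "real (card {\<Gamma> \<in> kout_choices n K. closedS \<Gamma> S (R - S)})
      \<le> real (card (kout_choices n K)) *
       (((real (n - 1) - real (card (R - S))) / real (n - 1)) ^ card S *
        ((real (n - 1) - real (card S)) / real (n - 1)) ^ card (R - S)) ^ K"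
      by (rule ratio_bound) (use SR R n K in auto)
    then show "real (card {\<Gamma> \<in> kout_choices n K. closedS \<Gamma> S (R - S)})
      \<le> real (card (kout_choices n K)) * uu n (card R) (card S) ^ K"
      by (simp add: uu_def cT)
  qed
  also have "\<dots> = real (card (kout_choices n K)) * (\<Sum>S\<in>Sub. uu n (card R) (card S) ^ K)"
    by (simp add: sum_distrib_left)
  also have "(\<Sum>S\<in>Sub. uu n (card R) (card S) ^ K)
      = (\<Sum>s=1..card R div 2. real (card R choose s) * uu n (card R) s ^ K)"
    unfolding Sub_def by (rule sum_by_card[OF fin])
  finally show ?thesis .
qed

lemma prob_bound:
  assumes n: "2 \<le> n" and K: "K \<le> n - 1" and g: "g \<le> n"
  shows "1 - conn_prob n K g \<le> (\<Sum>s=1..(n - g) div 2. real ((n - g) choose s) * uu n (n - g) s ^ K)"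
proof -
  define Fb where "Fb = (\<Sum>s=1..(n - g) div 2. real ((n - g) choose s) * uu n (n - g) s ^ K)"
  define kc where "kc = kout_choices n K"
  define dc where "dc = deletion_choices n g"
  define Good where "Good = {(\<Gamma>, D) \<in> outcomes n K g. graph_connected \<Gamma> ({1..n} - D)}"
  define Bad where "Bad = {(\<Gamma>, D) \<in> outcomes n K g. \<not> graph_connected \<Gamma> ({1..n} - D)}"
  have findc: "finite dc" unfolding dc_def deletion_choices_def
    using finite_ksub[of "{1..n}" g] by simp
  have finkc: "finite kc" unfolding kc_def by (rule finite_kout)
  have outc: "outcomes n K g = kc \<times> dc" by (simp add: outcomes_def kc_def dc_def)
  have finO: "finite (outcomes n K g)" using outc findc finkc by simp
  have ckc: "card kc > 0" unfolding kc_def card_kout using K by simp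
  have cdc: "card dc > 0" unfolding dc_def deletion_choices_def
    using n_subsets[of "{1..n}" g] g by simp
  have cO: "card (outcomes n K g) = card kc * card dc" using outc by (simp add: card_cartesian_product)
  have GB: "Bad = outcomes n K g - Good" by (auto simp: Good_def Bad_def)
  have GO: "Good \<subseteq> outcomes n K g" by (auto simp: Good_def)
  have le: "card Good \<le> card (outcomes n K g)" by (rule card_mono[OF finO GO])
  have "card Bad = card (outcomes n K g) - card Good"
    unfolding GB by (rule card_Diff_subset[OF finite_subset[OF GO finO] GO])
  then have cB: "real (card Bad) = real (card (outcomes n K g)) - real (card Good)"
    using le by (simp add: of_nat_diff)
  have subB: "Bad \<subseteq> (\<Union>D\<in>dc. {\<Gamma> \<in> kc. \<not> graph_connected \<Gamma> ({1..n} - D)} \<times> {D})"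
    by (auto simp: Bad_def outc)
  have "card Bad \<le> card (\<Union>D\<in>dc. {\<Gamma> \<in> kc. \<not> graph_connected \<Gamma> ({1..n} - D)} \<times> {D})"
    by (rule card_mono[OF _ subB]) (use findc finkc in auto)
  also have "\<dots> \<le> (\<Sum>D\<in>dc. card ({\<Gamma> \<in> kc. \<not> graph_connected \<Gamma> ({1..n} - D)} \<times> {D}))"
    by (rule card_UN_le[OF findc])
  also have "\<dots> = (\<Sum>D\<in>dc. card {\<Gamma> \<in> kc. \<not> graph_connected \<Gamma> ({1..n} - D)})"
    by (simp add: card_cartesian_product)
  finally have "real (card Bad) \<le> real (\<Sum>D\<in>dc. card {\<Gamma> \<in> kc. \<not> graph_connected \<Gamma> ({1..n} - D)})"
    by (simp only: of_nat_le_iff)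
  then have "real (card Bad) \<le> (\<Sum>D\<in>dc. real (card {\<Gamma> \<in> kc. \<not> graph_connected \<Gamma> ({1..n} - D)}))"
    by (simp only: of_nat_sum)
  also have "\<dots> \<le> (\<Sum>D\<in>dc. real (card kc) * Fb)"
  proof (rule sum_mono)
    fix D assume D: "D \<in> dc"
    then have Dn: "D \<subseteq> {1..n}" and cD: "card D = g" by (auto simp: dc_def deletion_choices_def)
    have cR: "card ({1..n} - D) = n - g" using Dn cD by (simp add: card_Diff_subset finite_subset)
    show "real (card {\<Gamma> \<in> kc. \<not> graph_connected \<Gamma> ({1..n} - D)}) \<le> real (card kc) * Fb"
      using bad_bound[of "{1..n} - D" n K] n K unfolding kc_def Fb_def cR by auto
  qed
  also have "\<dots> = real (card dc) * real (card kc) * Fb" by simp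
  finally have bB: "real (card Bad) \<le> real (card dc) * real (card kc) * Fb" .
  have "conn_prob n K g = real (card Good) / real (card (outcomes n K g))"
    by (simp add: conn_prob_def Good_def)
  then have "1 - conn_prob n K g = real (card Bad) / real (card (outcomes n K g))"
    using cB cO ckc cdc by (simp add: field_simps)
  also have "\<dots> \<le> Fb"
    using bB cO ckc cdc by (simp add: divide_le_eq mult.commute mult.left_commute)
  finally show ?thesis unfolding Fb_def .
qed



definition yy :: "nat \<Rightarrow> nat \<Rightarrow> nat \<Rightarrow> nat \<Rightarrow> real" where
  "yy n m k s = exp 1 * real m / real s * ((real (n - 1) - real (m - s)) / real (n - 1)) ^ k
      * exp (- (real k * real (m - s) / real (n - 1)))"

lemma term_bound:
  assumes n: "2 \<le> n" and m: "m \<le> n" and s1: "1 \<le> s" and s2: "2 * s \<le> m" and k: "k \<le> K"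
  shows "real (m choose s) * uu n m s ^ K \<le> yy n m k s ^ s"
proof -
  define N where "N = real (n - 1)"
  define t where "t = m - s"
  define a where "a = (N - real t) / N"
  define b where "b = (N - real s) / N"
  have Npos: "N > 0" using n by (simp add: N_def)
  have tN: "real t \<le> N" using m s1 s2 n by (simp add: N_def t_def)
  have sN: "real s \<le> N" using m s1 s2 n by (simp add: N_def)
  have a0: "0 \<le> a" and a1: "a \<le> 1" using tN Npos by (simp_all add: a_def field_simps)
  have b0: "0 \<le> b" and b1: "b \<le> 1" using sN Npos by (simp_all add: b_def field_simps)
  have bexp: "b \<le> exp (- (real s / N))"
  proof -
    have "b = 1 + (- (real s / N))" using Npos by (simp add: b_def field_simps)
    also have "\<dots> \<le> exp (- (real s / N))" by (rule exp_ge_add_one_self)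
    finally show ?thesis .
  qed
  have u: "uu n m s = a ^ s * b ^ t" by (simp add: uu_def a_def b_def N_def t_def)
  have u0: "0 \<le> uu n m s" and u1: "uu n m s \<le> 1"
    using a0 a1 b0 b1 by (simp_all add: u mult_le_one power_le_one)
  have "uu n m s ^ K \<le> uu n m s ^ k" by (rule power_decreasing[OF k u0 u1])
  also have "uu n m s ^ k = (a ^ k) ^ s * (b ^ t) ^ k"
    by (simp add: u power_mult_distrib power_mult[symmetric] mult.commute)
  also have "\<dots> \<le> (a ^ k) ^ s * (exp (- (real s / N)) ^ t) ^ k"
    by (intro mult_left_mono power_mono) (use b0 bexp a0 in auto)
  also have "(exp (- (real s / N)) ^ t) ^ k = exp (- (real k * real t / N)) ^ s"
  proof -
    have "(exp (- (real s / N)) ^ t) ^ k = exp (- (real s / N)) ^ (t * k)"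
      by (simp add: power_mult)
    also have "\<dots> = exp (real (t * k) * (- (real s / N)))" by (rule exp_of_nat_mult[symmetric])
    also have "\<dots> = exp (real s * (- (real k * real t / N)))" by (simp add: algebra_simps)
    also have "\<dots> = exp (- (real k * real t / N)) ^ s" by (rule exp_of_nat_mult)
    finally show ?thesis .
  qed
  also have "(a ^ k) ^ s * exp (- (real k * real t / N)) ^ s = (a ^ k * exp (- (real k * real t / N))) ^ s"
    by (simp add: power_mult_distrib)
  finally have uk: "uu n m s ^ K \<le> (a ^ k * exp (- (real k * real t / N))) ^ s" .
  have "real (m choose s) * uu n m s ^ K
      \<le> (exp 1 * real m / real s) ^ s * (a ^ k * exp (- (real k * real t / N))) ^ s"
    by (intro mult_mono choose_le_em[OF s1] uk) (use u0 in auto)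
  also have "\<dots> = yy n m k s ^ s"
    by (simp add: yy_def power_mult_distrib[symmetric] a_def N_def t_def mult.assoc)
  finally show ?thesis .
qed

lemma geo_sum:
  fixes q :: real assumes "0 \<le> q" "q < 1"
  shows "(\<Sum>s=L..M. q ^ s) \<le> q ^ L / (1 - q)"
proof -
  have "(\<Sum>s=L..M. q ^ s) = (if M < L then 0 else (q ^ L - q ^ Suc M) / (1 - q))"
    using assms by (simp add: sum_gp)
  also have "\<dots> \<le> q ^ L / (1 - q)"
    using assms by (auto simp: divide_right_mono)
  finally show ?thesis .
qed

lemma sum_split_bound:
  fixes y :: "nat \<Rightarrow> real"
  assumes y0: "\<And>s. s \<in> {1..M} \<Longrightarrow> 0 \<le> y s"
    and yd: "\<And>s. s \<in> {1..M} \<Longrightarrow> s \<le> L \<Longrightarrow> y s \<le> d"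
    and yq: "\<And>s. s \<in> {1..M} \<Longrightarrow> L < s \<Longrightarrow> y s \<le> q"
    and d: "0 \<le> d" "d < 1" and q: "0 \<le> q" "q < 1"
  shows "(\<Sum>s=1..M. y s ^ s) \<le> d / (1 - d) + q ^ Suc L / (1 - q)"
proof -
  have "(\<Sum>s=1..M. y s ^ s) \<le> (\<Sum>s=1..M. d ^ s + (if L < s then q ^ s else 0))"
  proof (rule sum_mono)
    fix s assume s: "s \<in> {1..M}"
    show "y s ^ s \<le> d ^ s + (if L < s then q ^ s else 0)"
    proof (cases "s \<le> L")
      case True
      then have "y s ^ s \<le> d ^ s" using yd[OF s] y0[OF s] by (intro power_mono) auto
      then show ?thesis using True by simp
    next
      case False
      then have "y s ^ s \<le> q ^ s" using yq[OF s] y0[OF s] by (intro power_mono) auto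
      moreover have "0 \<le> d ^ s" using d by simp
      ultimately show ?thesis using False by simp
    qed
  qed
  also have "\<dots> = (\<Sum>s=1..M. d ^ s) + (\<Sum>s\<in>{s\<in>{1..M}. L < s}. q ^ s)"
  proof -
    have "(\<Sum>s=1..M. (if L < s then q ^ s else 0)) = (\<Sum>s\<in>{s\<in>{1..M}. L < s}. q ^ s)"
      by (rule sum.inter_filter[symmetric]) simp
    then show ?thesis by (simp only: sum.distrib)
  qed
  also have "{s\<in>{1..M}. L < s} = {Suc L..M}" by auto
  also have "(\<Sum>s=1..M. d ^ s) \<le> d ^ 1 / (1 - d)" by (rule geo_sum[OF d])
  also have "(\<Sum>s=Suc L..M. q ^ s) \<le> q ^ Suc L / (1 - q)" by (rule geo_sum[OF q])
  finally show ?thesis by simp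
qed



lemma regA1:
  fixes N nn m s g :: real
  assumes N: "N > 0" and s1: "1 \<le> s" and ss: "s \<le> sqrt nn" and g: "0 \<le> g"
    and m0: "0 \<le> m" and mn: "m \<le> nn" and sm: "s \<le> m" and eq: "N - (m - s) = s + g - 1"
  shows "exp 1 * m / s * ((N - (m - s)) / N) ^ 2 * exp (- (2 * (m - s) / N))
      \<le> 2 * exp 1 * nn * (sqrt nn + g ^ 2) / N ^ 2"
proof -
  have nn0: "0 \<le> nn" using m0 mn by simp
  have x0: "0 \<le> s + g - 1" using s1 g by simp
  have E1: "exp (- (2 * (m - s) / N)) \<le> 1" using sm N by simp
  have P0: "0 \<le> exp 1 * m / s * ((N - (m - s)) / N) ^ 2" using m0 s1 by simp
  have "exp 1 * m / s * ((N - (m - s)) / N) ^ 2 * exp (- (2 * (m - s) / N))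
      \<le> exp 1 * m / s * ((N - (m - s)) / N) ^ 2"
    using mult_left_mono[OF E1 P0] by simp
  also have "\<dots> = exp 1 * (m * (s + g - 1) ^ 2) / (s * N ^ 2)"
    unfolding eq by (simp add: power_divide)
  also have "\<dots> \<le> exp 1 * (2 * nn * (sqrt nn + g ^ 2) * s) / (s * N ^ 2)"
  proof (intro divide_right_mono mult_left_mono)
    have "(s + g - 1) ^ 2 \<le> (s + g) ^ 2" using x0 by (intro power_mono) auto
    also have "\<dots> \<le> 2 * s ^ 2 + 2 * g ^ 2"
    proof -
      have "(s + g) ^ 2 = 2 * s ^ 2 + 2 * g ^ 2 - (s - g) ^ 2" by (simp add: power2_eq_square algebra_simps)
      moreover have "0 \<le> (s - g) ^ 2" by simp
      ultimately show ?thesis by linarith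
    qed
    finally have h1: "(s + g - 1) ^ 2 \<le> 2 * s ^ 2 + 2 * g ^ 2" .
    have h2: "s ^ 2 \<le> sqrt nn * s" using ss s1 by (simp add: power2_eq_square mult_right_mono)
    have h3: "g ^ 2 \<le> g ^ 2 * s" using s1 by (simp add: mult_le_cancel_left1)
    have "m * (s + g - 1) ^ 2 \<le> nn * (2 * s ^ 2 + 2 * g ^ 2)"
      by (intro mult_mono mn h1) (use nn0 in auto)
    also have "\<dots> \<le> nn * (2 * (sqrt nn + g ^ 2) * s)"
      using h2 h3 nn0 by (intro mult_left_mono) (auto simp: algebra_simps)
    finally have "m * (s + g - 1) ^ 2 \<le> nn * (2 * (sqrt nn + g ^ 2) * s)" .
    then show "m * (s + g - 1) ^ 2 \<le> 2 * nn * (sqrt nn + g ^ 2) * s" by (simp add: algebra_simps)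
  qed (use s1 N in auto)
  also have "\<dots> = 2 * exp 1 * nn * (sqrt nn + g ^ 2) / N ^ 2"
    using s1 N by (simp add: field_simps)
  finally show ?thesis .
qed

lemma regA2:
  fixes N nn m s g :: real
  assumes N: "N > 0" and s1: "1 \<le> s" and ss: "sqrt nn < s" and nn: "0 < nn" and g: "0 \<le> g"
    and sm: "2 * s \<le> m" and eq: "N - (m - s) = s + g - 1"
  shows "exp 1 * m / s * ((N - (m - s)) / N) ^ 2 * exp (- (2 * (m - s) / N))
      \<le> exp 1 / 2 * (m / N) ^ 2 * (1 + g / sqrt nn) ^ 2 * exp (- (m / N))"
proof -
  define c where "c = 1 + g / sqrt nn"
  define \<alpha> where "\<alpha> = s / N"
  have sq: "sqrt nn > 0" using nn by simp
  have c1: "1 \<le> c" using g sq by (simp add: c_def)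
  have al0: "0 \<le> \<alpha>" using s1 N by (simp add: \<alpha>_def)
  have alm: "\<alpha> \<le> m / (2 * N)" using sm N by (simp add: \<alpha>_def field_simps)
  have gg: "g \<le> g * (s / sqrt nn)"
  proof -
    have "1 \<le> s / sqrt nn" using ss sq by simp
    from mult_left_mono[OF this g] show ?thesis by simp
  qed
  have b: "(s + g - 1) / N \<le> \<alpha> * c"
  proof -
    have "s * c = s + g * (s / sqrt nn)" by (simp add: c_def algebra_simps)
    then have "s + g - 1 \<le> s * c" using gg by linarith
    then show ?thesis using N by (simp add: \<alpha>_def divide_right_mono)
  qed
  have b0: "0 \<le> (s + g - 1) / N" using s1 g N by simp
  have b2: "((s + g - 1) / N) ^ 2 \<le> \<alpha> ^ 2 * c ^ 2"
    using power_mono[OF b b0, of 2] by (simp add: power_mult_distrib)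
  have ex: "exp (- (2 * (m - s) / N)) = exp (- (2 * m / N)) * exp (2 * \<alpha>)"
    by (simp add: \<alpha>_def exp_add[symmetric] diff_divide_distrib algebra_simps)
  have mono: "\<alpha> * exp (2 * \<alpha>) \<le> m / (2 * N) * exp (m / N)"
  proof (rule mult_mono)
    show "exp (2 * \<alpha>) \<le> exp (m / N)" using alm N by (simp add: field_simps)
  qed (use alm al0 in auto)
  have m0: "0 \<le> m" using sm s1 by simp
  have "exp 1 * m / s * ((N - (m - s)) / N) ^ 2 * exp (- (2 * (m - s) / N))
      = exp 1 * m / s * ((s + g - 1) / N) ^ 2 * exp (- (2 * (m - s) / N))" by (simp add: eq)
  also have "\<dots> \<le> exp 1 * m / s * (\<alpha> ^ 2 * c ^ 2) * exp (- (2 * (m - s) / N))"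
    by (intro mult_right_mono mult_left_mono b2) (use m0 s1 in auto)
  also have "\<dots> = exp 1 * (m / N) * c ^ 2 * exp (- (2 * m / N)) * (\<alpha> * exp (2 * \<alpha>))"
    unfolding ex using s1 N by (simp add: \<alpha>_def field_simps power2_eq_square)
  also have "\<dots> \<le> exp 1 * (m / N) * c ^ 2 * exp (- (2 * m / N)) * (m / (2 * N) * exp (m / N))"
    by (intro mult_left_mono mono) (use m0 N in auto)
  also have "\<dots> = exp 1 / 2 * (m / N) ^ 2 * c ^ 2 * (exp (- (2 * m / N)) * exp (m / N))"
    by (simp add: power2_eq_square field_simps)
  also have "exp (- (2 * m / N)) * exp (m / N) = exp (- (m / N))"
    by (simp add: exp_add[symmetric])
  finally show ?thesis by (simp add: c_def)
qed



lemma regB1: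
  fixes N nn m s g :: real and K :: nat
  assumes N: "N > 0" and s1: "1 \<le> s" and sg: "s \<le> g" and m0: "0 \<le> m" and mn: "m \<le> nn"
    and nn: "1 \<le> nn" and sm: "s \<le> m" and eq: "N - (m - s) = s + g - 1"
    and gN: "2 * g \<le> exp (- 4) * N" and K: "ln nn / 3 \<le> real K"
  shows "exp 1 * m / s * ((N - (m - s)) / N) ^ K * exp (- (real K * (m - s) / N))
      \<le> 2 * exp 1 * exp (- (ln nn / 12))"
proof -
  define a where "a = (s + g - 1) / N"
  have a0: "0 \<le> a" using s1 sg N by (simp add: a_def)
  have a1: "a \<le> exp (- 4)" using sg gN N by (simp add: a_def field_simps)
  have aK: "a ^ K \<le> exp (- (4 * ln nn / 3))"
  proof -
    have "a ^ K \<le> exp (- 4) ^ K" by (rule power_mono[OF a1 a0])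
    also have "\<dots> = exp (real K * (- 4))" by (rule exp_of_nat_mult[symmetric])
    also have "\<dots> \<le> exp (- (4 * ln nn / 3))" using K by simp
    finally show ?thesis .
  qed
  have E1: "exp (- (real K * (m - s) / N)) \<le> 1" using sm N by simp
  have "m \<le> m * s" using mult_left_mono[OF s1 m0] by simp
  then have "m / s \<le> m" using s1 by (simp add: divide_le_eq)
  then have ms: "m / s \<le> nn" using mn by linarith
  have "exp 1 * m / s * ((N - (m - s)) / N) ^ K * exp (- (real K * (m - s) / N))
      \<le> exp 1 * m / s * a ^ K"
  proof -
    have P: "0 \<le> exp 1 * m / s * a ^ K" using m0 s1 a0 by simp
    show ?thesis unfolding eq a_def[symmetric]
      by (rule mult_right_le_one_le[OF P _ E1]) simp
  qed
  also have "\<dots> \<le> exp 1 * nn * exp (- (4 * ln nn / 3))"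
  proof -
    have h: "(m / s) * a ^ K \<le> nn * exp (- (4 * ln nn / 3))"
      by (rule mult_mono[OF ms aK]) (use nn a0 in auto)
    have "exp 1 * m / s * a ^ K = exp 1 * (m / s * a ^ K)" by simp
    also have "\<dots> \<le> exp 1 * (nn * exp (- (4 * ln nn / 3)))"
      by (rule mult_left_mono[OF h]) simp
    also have "\<dots> = exp 1 * nn * exp (- (4 * ln nn / 3))" by simp
    finally show ?thesis .
  qed
  also have "\<dots> = exp 1 * exp (- (ln nn / 3))"
  proof -
    have e: "exp (ln nn) = nn" using nn by (intro exp_ln) simp
    have l: "ln nn + - (4 * ln nn / 3) = - (ln nn / 3)" by linarith
    have "nn * exp (- (4 * ln nn / 3)) = exp (ln nn) * exp (- (4 * ln nn / 3))" by (simp only: e)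
    also have "\<dots> = exp (ln nn + - (4 * ln nn / 3))" by (simp only: exp_add)
    also have "\<dots> = exp (- (ln nn / 3))" by (simp only: l)
    finally show ?thesis by (simp only: mult.assoc)
  qed
  also have "\<dots> \<le> 2 * exp 1 * exp (- (ln nn / 12))"
  proof -
    have "ln nn \<ge> 0" using nn by simp
    then have "exp (- (ln nn / 3)) \<le> exp (- (ln nn / 12))" by simp
    then have "exp 1 * exp (- (ln nn / 3)) \<le> exp 1 * exp (- (ln nn / 12))"
      by (rule mult_left_mono) simp
    moreover have "exp 1 * exp (- (ln nn / 12)) \<le> 2 * exp 1 * exp (- (ln nn / 12))" by simp
    ultimately show ?thesis by linarith
  qed
  finally show ?thesis .
qed

lemma regB2:
  fixes N nn m s g :: real and K :: nat
  assumes N: "N > 0" and gs: "g < s" and g1: "1 \<le> g" and sm: "2 * s \<le> m" and mN: "m \<le> N"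
    and Nm: "N \<le> 2 * m" and eq: "N - (m - s) = s + g - 1"
    and K1: "1 \<le> K" and K: "ln nn / 3 \<le> real K"
  shows "exp 1 * m / s * ((N - (m - s)) / N) ^ K * exp (- (real K * (m - s) / N))
      \<le> 2 * exp 1 * exp (- (ln nn / 12))"
proof -
  define a where "a = (s + g - 1) / N"
  have s0: "0 < s" using gs g1 by simp
  have a0: "0 \<le> a" using gs g1 N by (simp add: a_def)
  have a2: "a \<le> 2 * s / N" using gs N by (simp add: a_def divide_right_mono)
  have "2 * s / N \<le> 1" using sm mN N by simp
  then have a1: "a \<le> 1" using a2 by linarith
  have aK: "a ^ K \<le> a" using power_decreasing[OF K1 a0 a1] by simp
  have ma: "m / s * a ^ K \<le> 2"
  proof -
    have "m / s * a ^ K \<le> m / s * (2 * s / N)"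
      using aK a2 sm s0 by (intro mult_left_mono) auto
    also have "\<dots> = 2 * (m / N)" using s0 by (simp add: field_simps)
    also have "\<dots> \<le> 2"
    proof -
      have "m / N \<le> 1" using mN N by simp
      then show ?thesis by linarith
    qed
    finally show ?thesis .
  qed
  have ex: "exp (- (real K * (m - s) / N)) \<le> exp (- (ln nn / 12))"
  proof -
    have "N / 4 \<le> m - s" using sm Nm by simp
    then have "1 / 4 \<le> (m - s) / N" using N by (simp add: field_simps)
    then have h1: "real K * (1 / 4) \<le> real K * ((m - s) / N)" by (intro mult_left_mono) auto
    have h2: "ln nn / 12 \<le> real K * (1 / 4)" using K by simp
    have h3: "ln nn / 12 \<le> real K * ((m - s) / N)" using h1 h2 by linarith
    have eqK: "real K * (m - s) / N = real K * ((m - s) / N)" by simp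
    show ?thesis unfolding eqK using h3 by simp
  qed
  have "exp 1 * m / s * ((N - (m - s)) / N) ^ K * exp (- (real K * (m - s) / N))
      = exp 1 * (m / s * a ^ K) * exp (- (real K * (m - s) / N))" by (simp add: a_def eq)
  also have "\<dots> \<le> exp 1 * 2 * exp (- (ln nn / 12))"
    using ma ex a0 s0 sm by (intro mult_mono mult_left_mono) auto
  finally show ?thesis by simp
qed



lemma yy_real:
  assumes "1 \<le> n" "s \<le> m"
  shows "yy n m k s = exp 1 * real m / real s *
     (((real n - 1) - (real m - real s)) / (real n - 1)) ^ k *
     exp (- (real k * (real m - real s) / (real n - 1)))"
  using assms by (simp add: yy_def of_nat_diff)

lemma yy_nonneg:
  assumes "1 \<le> n" "1 \<le> s" "s \<le> m" "m \<le> n"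
  shows "0 \<le> yy n m k s"
proof -
  have "0 \<le> real (n - 1) - real (m - s)" using assms by (simp add: of_nat_diff)
  then show ?thesis unfolding yy_def by simp
qed

lemma conn_prob_bounds: "0 \<le> conn_prob n K g" "conn_prob n K g \<le> 1"
proof -
  have fin: "finite (outcomes n K g)"
    unfolding outcomes_def deletion_choices_def using finite_kout[of n K] finite_ksub[of "{1..n}" g] by simp
  have "card {(\<Gamma>, D) \<in> outcomes n K g. graph_connected \<Gamma> ({1..n} - D)} \<le> card (outcomes n K g)"
    by (rule card_mono[OF fin]) auto
  then show "conn_prob n K g \<le> 1" unfolding conn_prob_def
    by (cases "card (outcomes n K g) = 0") (auto simp: divide_le_eq_1)
  show "0 \<le> conn_prob n K g" unfolding conn_prob_def by simp
qed

lemma partA_bound: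
  fixes n K g :: nat
  assumes n2: "2 \<le> n" and K: "K \<le> n - 1" and K2: "2 \<le> K" and g: "g \<le> n"
    and d0: "0 \<le> d" and d1: "d < 1"
    and dd: "d = 2 * exp 1 * real n * (sqrt (real n) + real g ^ 2) / (real n - 1) ^ 2"
    and qq: "exp 1 / 2 * (real (n - g) / (real n - 1)) ^ 2 * (1 + real g / sqrt (real n)) ^ 2
              * exp (- (real (n - g) / (real n - 1))) \<le> 3 / 4"
  shows "1 - conn_prob n K g \<le> d / (1 - d) + (3 / 4) ^ Suc (nat \<lfloor>sqrt (real n)\<rfloor>) / (1 - 3 / 4)"
proof -
  define m where "m = n - g"
  define L where "L = nat \<lfloor>sqrt (real n)\<rfloor>"
  have mn: "m \<le> n" by (simp add: m_def)
  have rm: "real m = real n - real g" using g by (simp add: m_def of_nat_diff)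
  have "1 - conn_prob n K g \<le> (\<Sum>s=1..m div 2. real (m choose s) * uu n m s ^ K)"
    unfolding m_def by (rule prob_bound[OF n2 K g])
  also have "\<dots> \<le> (\<Sum>s=1..m div 2. yy n m 2 s ^ s)"
    by (intro sum_mono term_bound) (use n2 mn K2 in auto)
  also have "\<dots> \<le> d / (1 - d) + (3 / 4) ^ Suc L / (1 - 3 / 4)"
  proof (rule sum_split_bound)
    fix s assume s: "s \<in> {1..m div 2}"
    then have s1: "1 \<le> s" and s2: "2 * s \<le> m" by auto
    then have sm: "s \<le> m" by simp
    have eqr: "(real n - 1) - (real m - real s) = real s + real g - 1" using rm by simp
    have yr: "yy n m 2 s = exp 1 * real m / real s *
       (((real n - 1) - (real m - real s)) / (real n - 1)) ^ 2 *
       exp (- (2 * (real m - real s) / (real n - 1)))"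
      using yy_real[of n s m 2] n2 sm by simp
    show "0 \<le> yy n m 2 s" by (rule yy_nonneg) (use n2 s1 sm mn in auto)
    show "yy n m 2 s \<le> d" if "s \<le> L"
    proof -
      have "real s \<le> sqrt (real n)"
      proof -
        have "real s \<le> real L" using that by simp
        also have "\<dots> \<le> sqrt (real n)" unfolding L_def by (rule of_nat_floor) simp
        finally show ?thesis .
      qed
      then show ?thesis unfolding yr dd
        by (intro regA1) (use n2 s1 sm mn eqr in auto)
    qed
    show "yy n m 2 s \<le> 3 / 4" if "L < s"
    proof -
      have "sqrt (real n) < real s"
      proof -
        have "sqrt (real n) < real_of_int \<lfloor>sqrt (real n)\<rfloor> + 1" by simp
        also have "\<dots> = real (Suc L)" unfolding L_def by simp
        also have "\<dots> \<le> real s" using that by simp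
        finally show ?thesis .
      qed
      then have "yy n m 2 s \<le> exp 1 / 2 * (real m / (real n - 1)) ^ 2 * (1 + real g / sqrt (real n)) ^ 2
              * exp (- (real m / (real n - 1)))"
        unfolding yr
        by (intro regA2) (use n2 s1 s2 eqr in auto)
      then show ?thesis using qq unfolding m_def by linarith
    qed
  qed (use d0 d1 in auto)
  finally show ?thesis unfolding L_def .
qed

lemma partB_bound:
  fixes n K g :: nat
  assumes n2: "2 \<le> n" and K: "K \<le> n - 1" and K1: "1 \<le> K" and g1: "1 \<le> g"
    and gN: "2 * real g \<le> exp (- 4) * (real n - 1)" and Nm: "real n - 1 \<le> 2 * real (n - g)"
    and Kl: "ln (real n) / 3 \<le> real K"
    and d1: "2 * exp 1 * exp (- (ln (real n) / 12)) < 1"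
  shows "1 - conn_prob n K g \<le> (2 * exp 1 * exp (- (ln (real n) / 12))) / (1 - 2 * exp 1 * exp (- (ln (real n) / 12)))"
proof -
  define m where "m = n - g"
  define d where "d = 2 * exp 1 * exp (- (ln (real n) / 12))"
  have g: "g \<le> n"
  proof -
    have "exp (- 4) * (real n - 1) \<le> real n - 1"
      by (rule mult_left_le_one_le) (use n2 in auto)
    then have "real g \<le> real n" using gN by linarith
    then show ?thesis by simp
  qed
  have mn: "m \<le> n" by (simp add: m_def)
  have rm: "real m = real n - real g" using g by (simp add: m_def of_nat_diff)
  have d0: "0 \<le> d" by (simp add: d_def)
  have "1 - conn_prob n K g \<le> (\<Sum>s=1..m div 2. real (m choose s) * uu n m s ^ K)"
    unfolding m_def by (rule prob_bound[OF n2 K g])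
  also have "\<dots> \<le> (\<Sum>s=1..m div 2. yy n m K s ^ s)"
    by (intro sum_mono term_bound) (use n2 mn in auto)
  also have "\<dots> \<le> (\<Sum>s=1..m div 2. d ^ s)"
  proof (rule sum_mono)
    fix s assume s: "s \<in> {1..m div 2}"
    then have s1: "1 \<le> s" and s2: "2 * s \<le> m" by auto
    then have sm: "s \<le> m" by simp
    have eqr: "(real n - 1) - (real m - real s) = real s + real g - 1" using rm by simp
    have yr: "yy n m K s = exp 1 * real m / real s *
       (((real n - 1) - (real m - real s)) / (real n - 1)) ^ K *
       exp (- (real K * (real m - real s) / (real n - 1)))"
      using yy_real[of n s m K] n2 sm by simp
    have y0: "0 \<le> yy n m K s" by (rule yy_nonneg) (use n2 s1 sm mn in auto)
    have "yy n m K s \<le> d"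
    proof (cases "s \<le> g")
      case True
      show ?thesis unfolding yr d_def
        by (rule regB1) (use n2 s1 True sm mn eqr gN Kl in auto)
    next
      case False
      have mN: "real m \<le> real n - 1" using rm g1 by simp
      show ?thesis unfolding yr d_def
        by (rule regB2) (use n2 False g1 s2 mN Nm eqr K1 Kl rm in \<open>auto simp: m_def\<close>)
    qed
    then show "yy n m K s ^ s \<le> d ^ s" using y0 by (intro power_mono) auto
  qed
  also have "\<dots> \<le> d ^ 1 / (1 - d)" by (rule geo_sum) (use d0 d1 in \<open>auto simp: d_def\<close>)
  finally show ?thesis by (simp add: d_def)
qed



lemma conv_from_bound:
  fixes P B :: "nat \<Rightarrow> real"
  assumes "\<And>n. P n \<le> 1" and "eventually (\<lambda>n. 1 - P n \<le> B n) at_top" and "B \<longlonglongrightarrow> 0"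
  shows "P \<longlonglongrightarrow> 1"
proof -
  have "(\<lambda>n. 1 - P n) \<longlonglongrightarrow> 0"
    by (rule tendsto_sandwich[of "\<lambda>_. 0" _ _ B]) (use assms in auto)
  then have "(\<lambda>n. 1 - (1 - P n)) \<longlonglongrightarrow> 1 - 0" by (intro tendsto_diff) auto
  then show ?thesis by simp
qed

lemma partA:
  fixes K \<gamma> :: "nat \<Rightarrow> nat"
  assumes wd: "eventually (\<lambda>n. K n < n) at_top"
    and go: "(\<lambda>n. real (\<gamma> n)) \<in> o(\<lambda>n. sqrt (real n))" and K2: "\<forall>n. K n \<ge> 2"
  shows "(\<lambda>n. conn_prob n (K n) (\<gamma> n)) \<longlonglongrightarrow> 1"
proof -
  define g where "g = (\<lambda>n. real (\<gamma> n))"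
  define d where "d = (\<lambda>n. 2 * exp 1 * real n * (sqrt (real n) + g n ^ 2) / (real n - 1) ^ 2)"
  define q where "q = (\<lambda>n::nat. exp 1 / 2 * (real (n - \<gamma> n) / (real n - 1)) ^ 2 * (1 + g n / sqrt (real n)) ^ 2
              * exp (- (real (n - \<gamma> n) / (real n - 1))))"
  define B where "B = (\<lambda>n. d n / (1 - d n) + (3 / 4) ^ Suc (nat \<lfloor>sqrt (real n)\<rfloor>) / (1 - 3 / 4 :: real))"
  have hg: "(\<lambda>n. g n / sqrt (real n)) \<longlonglongrightarrow> 0"
    unfolding g_def using smalloD_tendsto[OF go] by simp
  have ev2: "eventually (\<lambda>n::nat. 2 \<le> n) at_top" by (rule eventually_ge_at_top)
  have hgn: "(\<lambda>n. g n / real n) \<longlonglongrightarrow> 0"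
  proof -
    have "(\<lambda>n. (g n / sqrt (real n)) * (1 / sqrt (real n))) \<longlonglongrightarrow> 0 * 0"
      by (intro tendsto_mult hg) real_asymp
    moreover have "eventually (\<lambda>n. (g n / sqrt (real n)) * (1 / sqrt (real n)) = g n / real n) at_top"
      using ev2 by eventually_elim simp
    ultimately show ?thesis by (simp add: tendsto_cong)
  qed
  have evg: "eventually (\<lambda>n. \<gamma> n \<le> n) at_top"
  proof -
    have "eventually (\<lambda>n. g n / real n < 1) at_top" by (rule order_tendstoD(2)[OF hgn]) simp
    then show ?thesis using ev2
    proof eventually_elim
      case (elim n)
      then have "g n < real n" by (simp add: divide_less_eq)
      then show ?case by (simp add: g_def)
    qed
  qed
  have dlim: "d \<longlonglongrightarrow> 0"
  proof -
    have "(\<lambda>n. 2 * exp 1 * (real n * sqrt (real n) / (real n - 1) ^ 2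
            + (real n / (real n - 1)) ^ 2 * (g n / sqrt (real n)) ^ 2)) \<longlonglongrightarrow> 2 * exp 1 * (0 + 1 ^ 2 * 0 ^ 2)"
    proof (intro tendsto_intros hg)
      show "(\<lambda>n. real n * sqrt (real n) / (real n - 1) ^ 2) \<longlonglongrightarrow> 0" by real_asymp
      show "(\<lambda>n. real n / (real n - 1)) \<longlonglongrightarrow> 1" by real_asymp
    qed
    moreover have "eventually (\<lambda>n. 2 * exp 1 * (real n * sqrt (real n) / (real n - 1) ^ 2
            + (real n / (real n - 1)) ^ 2 * (g n / sqrt (real n)) ^ 2) = d n) at_top"
      using ev2
    proof eventually_elim
      case (elim n)
      then have "real n - 1 \<noteq> 0" "real n > 0" by auto
      then show ?case by (simp add: d_def power_divide field_simps) (simp add: power2_eq_square)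
    qed
    ultimately show ?thesis by (simp add: tendsto_cong)
  qed
  have qlim: "q \<longlonglongrightarrow> exp 1 / 2 * 1 ^ 2 * (1 + 0) ^ 2 * exp (- 1)"
  proof -
    have mN: "(\<lambda>n. real (n - \<gamma> n) / (real n - 1)) \<longlonglongrightarrow> 1"
    proof -
      have "(\<lambda>n. (real n / (real n - 1)) * (1 - g n / real n)) \<longlonglongrightarrow> 1 * (1 - 0)"
      proof (intro tendsto_intros hgn)
        show "(\<lambda>n. real n / (real n - 1)) \<longlonglongrightarrow> 1" by real_asymp
      qed
      moreover have "eventually (\<lambda>n. (real n / (real n - 1)) * (1 - g n / real n) = real (n - \<gamma> n) / (real n - 1)) at_top"
        using ev2 evg
      proof eventually_elim
        case (elim n)
        then show ?case by (simp add: g_def of_nat_diff field_simps)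
      qed
      ultimately have "(\<lambda>n. real (n - \<gamma> n) / (real n - 1)) \<longlonglongrightarrow> 1 * (1 - 0)" by (rule Lim_transform_eventually)
      then show ?thesis by simp
    qed
    show ?thesis unfolding q_def
      by (intro tendsto_intros mN hg)
  qed
  have qval: "exp 1 / 2 * 1 ^ 2 * (1 + 0) ^ 2 * exp (- 1) = (1 / 2 :: real)"
  proof -
    have ee: "exp 1 * exp (- 1) = (1::real)" by (rule exp_minus_inverse)
    have "exp 1 / 2 * 1 ^ 2 * (1 + 0) ^ 2 * exp (- 1) = (exp 1 * exp (- 1)) / (2::real)" by simp
    also have "\<dots> = 1 / 2" by (simp only: ee)
    finally show ?thesis .
  qed
  have evq: "eventually (\<lambda>n. q n < 3 / 4) at_top"
    by (rule order_tendstoD(2)[OF qlim]) (unfold qval, simp)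
  have evd: "eventually (\<lambda>n. d n < 1) at_top"
    by (rule order_tendstoD(2)[OF dlim]) simp
  have Blim: "B \<longlonglongrightarrow> 0"
  proof -
    have pw: "(\<lambda>n. (3 / 4 :: real) ^ Suc (nat \<lfloor>sqrt (real n)\<rfloor>)) \<longlonglongrightarrow> 0"
    proof (rule tendsto_sandwich[of "\<lambda>_. 0" _ _ "\<lambda>n. (3 / 4) powr sqrt (real n)"])
      show "eventually (\<lambda>n. (0::real) \<le> (3 / 4) ^ Suc (nat \<lfloor>sqrt (real n)\<rfloor>)) at_top" by simp
      show "eventually (\<lambda>n. (3 / 4 :: real) ^ Suc (nat \<lfloor>sqrt (real n)\<rfloor>) \<le> (3 / 4) powr sqrt (real n)) at_top"
      proof (intro always_eventually allI)
        fix n :: nat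
        have "sqrt (real n) \<le> real (Suc (nat \<lfloor>sqrt (real n)\<rfloor>))"
        proof -
          have "sqrt (real n) < real_of_int \<lfloor>sqrt (real n)\<rfloor> + 1" by simp
          also have "\<dots> = real (Suc (nat \<lfloor>sqrt (real n)\<rfloor>))" by simp
          finally show ?thesis by simp
        qed
        then have "(3 / 4 :: real) powr real (Suc (nat \<lfloor>sqrt (real n)\<rfloor>)) \<le> (3 / 4) powr sqrt (real n)"
          by (rule powr_mono') auto
        then show "(3 / 4 :: real) ^ Suc (nat \<lfloor>sqrt (real n)\<rfloor>) \<le> (3 / 4) powr sqrt (real n)"
        proof -
          note hp = \<open>(3 / 4 :: real) powr real (Suc (nat \<lfloor>sqrt (real n)\<rfloor>)) \<le> (3 / 4) powr sqrt (real n)\<close>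
          have pe: "(3 / 4 :: real) powr real (Suc (nat \<lfloor>sqrt (real n)\<rfloor>)) = (3 / 4) ^ Suc (nat \<lfloor>sqrt (real n)\<rfloor>)"
            by (rule powr_realpow) simp
          show ?thesis using hp by (simp only: pe)
        qed
      qed
      show "(\<lambda>n. (3 / 4 :: real) powr sqrt (real n)) \<longlonglongrightarrow> 0" by real_asymp
    qed simp
    have "B \<longlonglongrightarrow> 0 / (1 - 0) + 0 / (1 - 3 / 4)"
      unfolding B_def by (intro tendsto_intros dlim pw) simp_all
    then show ?thesis by simp
  qed
  show ?thesis
  proof (rule conv_from_bound[OF _ _ Blim])
    show "conn_prob n (K n) (\<gamma> n) \<le> 1" for n by (rule conn_prob_bounds)
    show "eventually (\<lambda>n. 1 - conn_prob n (K n) (\<gamma> n) \<le> B n) at_top"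
      using ev2 wd evg evq evd
    proof eventually_elim
      case (elim n)
      have d0: "0 \<le> d n" unfolding d_def g_def by simp
      show ?case unfolding B_def
        by (rule partA_bound) (use elim K2 d0 in \<open>auto simp: d_def q_def g_def\<close>)
    qed
  qed
qed

lemma partB:
  fixes K \<gamma> :: "nat \<Rightarrow> nat" and \<omega> :: "nat \<Rightarrow> real"
  assumes wd: "eventually (\<lambda>n. K n < n) at_top"
    and gO: "(\<lambda>n. real (\<gamma> n)) \<in> \<Omega>(\<lambda>n. sqrt (real n))"
    and go: "(\<lambda>n. real (\<gamma> n)) \<in> o(\<lambda>n. real n)"
    and Kw: "\<forall>n. real (K n) = r2 (\<gamma> n) + \<omega> n"
    and wl: "filterlim \<omega> at_top at_top"
  shows "(\<lambda>n. conn_prob n (K n) (\<gamma> n)) \<longlonglongrightarrow> 1"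
proof -
  define g where "g = (\<lambda>n. real (\<gamma> n))"
  define d where "d = (\<lambda>n::nat. 2 * exp 1 * exp (- (ln (real n) / 12)))"
  define B where "B = (\<lambda>n. d n / (1 - d n))"
  from gO obtain c where c0: "c > 0" and evc: "eventually (\<lambda>n. c * norm (sqrt (real n)) \<le> norm (real (\<gamma> n))) at_top"
    unfolding bigomega_def by blast
  have hgn: "(\<lambda>n. g n / real n) \<longlonglongrightarrow> 0"
    unfolding g_def using smalloD_tendsto[OF go] by simp
  have ev2: "eventually (\<lambda>n::nat. 2 \<le> n) at_top" by (rule eventually_ge_at_top)
  have dlim: "d \<longlonglongrightarrow> 0" unfolding d_def by real_asymp
  have Blim: "B \<longlonglongrightarrow> 0"
  proof -
    have "B \<longlonglongrightarrow> 0 / (1 - 0)" unfolding B_def by (intro tendsto_intros dlim) simp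
    then show ?thesis by simp
  qed
  have evd: "eventually (\<lambda>n. d n < 1) at_top"
    by (rule order_tendstoD(2)[OF dlim]) simp
  have e4: "0 < exp (- 4) / (4::real)" by simp
  have evs: "eventually (\<lambda>n. g n / real n < exp (- 4) / 4) at_top"
    by (rule order_tendstoD(2)[OF hgn e4])
  define C where "C = max 1 (- (2 / 3) * ln c)"
  have evw: "eventually (\<lambda>n. C \<le> \<omega> n) at_top"
    using wl by (simp add: filterlim_at_top)
  show ?thesis
  proof (rule conv_from_bound[OF _ _ Blim])
    show "conn_prob n (K n) (\<gamma> n) \<le> 1" for n by (rule conn_prob_bounds)
    show "eventually (\<lambda>n. 1 - conn_prob n (K n) (\<gamma> n) \<le> B n) at_top"
      using ev2 wd evc evd evs evw
    proof eventually_elim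
      case (elim n)
      have n2: "2 \<le> n" and Kn: "K n < n" and cs: "c * sqrt (real n) \<le> g n"
        and dn: "d n < 1" and sn: "g n / real n < exp (- 4) / 4" and wn: "C \<le> \<omega> n"
        using elim by (auto simp: g_def)
      have npos: "real n > 0" using n2 by simp
      have sqpos: "sqrt (real n) > 0" using npos by simp
      have "0 < c * sqrt (real n)" by (rule mult_pos_pos[OF c0 sqpos])
      then have gpos: "g n > 0" using cs by linarith
      have g1: "1 \<le> \<gamma> n" using gpos by (simp add: g_def)
      have e41: "exp (- 4) \<le> (1::real)" by simp
      have gsm: "g n < exp (- 4) / 4 * real n" using sn npos by (simp add: divide_less_eq)
      have gquarter: "g n \<le> real n / 4"
      proof -
        have "exp (- 4) / 4 * real n \<le> 1 / 4 * real n" using e41 npos by (intro mult_right_mono) auto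
        then show ?thesis using gsm by linarith
      qed
      have gle: "\<gamma> n \<le> n" using gquarter npos by (simp add: g_def)
      have gN: "2 * real (\<gamma> n) \<le> exp (- 4) * (real n - 1)"
      proof -
        have "2 * g n \<le> exp (- 4) * (real n / 2)" using gsm by simp
        also have "\<dots> \<le> exp (- 4) * (real n - 1)" using n2 by (intro mult_left_mono) auto
        finally show ?thesis by (simp add: g_def)
      qed
      have Nm: "real n - 1 \<le> 2 * real (n - \<gamma> n)"
        using gle gquarter by (simp add: of_nat_diff g_def)
      have lng: "ln c + ln (real n) / 2 \<le> ln (g n)"
      proof -
        have "ln (c * sqrt (real n)) \<le> ln (g n)" using cs c0 sqpos gpos by (subst ln_le_cancel_iff) auto
        moreover have "ln (c * sqrt (real n)) = ln c + ln (real n) / 2"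
          using c0 npos by (simp add: ln_mult ln_sqrt)
        ultimately show ?thesis by simp
      qed
      have lng0: "0 \<le> ln (g n)" using g1 by (simp add: g_def)
      have l2: "0 < ln 2 + 1 / (2::real)" "ln 2 + 1 / 2 \<le> (3 / 2 :: real)"
      proof -
        have "0 < ln (2::real)" by simp
        then show "0 < ln 2 + 1 / (2::real)" "ln 2 + 1 / 2 \<le> (3 / 2 :: real)"
          using ln_2_less_1 by linarith+
      qed
      have r2ge: "2 / 3 * ln (g n) \<le> r2 (\<gamma> n)"
      proof -
        have "ln (g n) / (3 / 2) \<le> ln (g n) / (ln 2 + 1 / 2)"
          by (rule divide_left_mono) (use lng0 l2 in auto)
        then show ?thesis by (simp add: r2_def g_def)
      qed
      have Kr: "real (K n) = r2 (\<gamma> n) + \<omega> n" using Kw by simp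
      have Kl: "ln (real n) / 3 \<le> real (K n)"
      proof -
        have "- (2 / 3) * ln c \<le> \<omega> n" using wn by (simp add: C_def)
        then show ?thesis using Kr r2ge lng by linarith
      qed
      have K1: "1 \<le> K n"
      proof -
        have "1 \<le> \<omega> n" using wn by (simp add: C_def)
        then have "1 \<le> real (K n)" using Kr r2ge lng0 by linarith
        then show ?thesis by simp
      qed
      show ?case unfolding B_def
        using partB_bound[OF n2 _ K1 g1 gN Nm Kl] Kn dn by (simp add: d_def)
    qed
  qed
qed


theorem theorem3p2:
  fixes K \<gamma> :: "nat \<Rightarrow> nat"
  assumes wd: "eventually (\<lambda>n. K n < n) at_top"
  shows
    "((\<lambda>n. real (\<gamma> n)) \<in> o(\<lambda>n. sqrt (real n)) \<and> (\<forall>n. K n \<ge> 2)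
        \<longrightarrow> (\<lambda>n. conn_prob n (K n) (\<gamma> n)) \<longlonglongrightarrow> 1)
     \<and>
     (\<forall>\<omega> :: nat \<Rightarrow> real.
       (\<lambda>n. real (\<gamma> n)) \<in> \<Omega>(\<lambda>n. sqrt (real n)) \<and>
       (\<lambda>n. real (\<gamma> n)) \<in> o(\<lambda>n. real n) \<and>
       (\<forall>n. real (K n) = r2 (\<gamma> n) + \<omega> n) \<and>
       filterlim \<omega> at_top at_top
       \<longrightarrow> (\<lambda>n. conn_prob n (K n) (\<gamma> n)) \<longlonglongrightarrow> 1)"
  proof (intro conjI allI impI)
  assume h: "(\<lambda>n. real (\<gamma> n)) \<in> o(\<lambda>n. sqrt (real n)) \<and> (\<forall>n. K n \<ge> 2)"
  then show "(\<lambda>n. conn_prob n (K n) (\<gamma> n)) \<longlonglongrightarrow> 1"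
    using partA[OF wd] by blast
next
  fix \<omega> :: "nat \<Rightarrow> real"
  assume h: "(\<lambda>n. real (\<gamma> n)) \<in> \<Omega>(\<lambda>n. sqrt (real n)) \<and>
       (\<lambda>n. real (\<gamma> n)) \<in> o(\<lambda>n. real n) \<and>
       (\<forall>n. real (K n) = r2 (\<gamma> n) + \<omega> n) \<and>
       filterlim \<omega> at_top at_top"
  then show "(\<lambda>n. conn_prob n (K n) (\<gamma> n)) \<longlonglongrightarrow> 1"
    using partB[OF wd] by blast
qed

end
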